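(* Let $G$ be a finite group. Then $G$ is nested if and only if $K_\infty=G$.
   Context: All groups are finite. For $\chi\in\mathrm{Irr}(G)$, the center of $\chi$ is $Z(\chi)=\{g\in G : |\chi(g)|=\chi(1)\}$; equivalently $Z(\chi)/\ker(\chi)=Z(G/\ker(\chi))$. A group $G$ is nested if for all $\chi,\psi\in\mathrm{Irr}(G)$ either $Z(\chi)\le Z(\psi)$ or $Z(\psi)\le Z(\chi)$. For a nonabelian group $H$, let $\mathcal{X}_H=\{\chi\in\mathrm{Irr}(H) : Z(\chi)>Z(H)\}$ (strict containment) and define $K(H)=\bigcap_{\chi\in\mathcal{X}_H}\ker(\chi)$; if $H$ is abelian, set $K(H)=H$. Define normal subgroups $K_i$ of $G$ by $K_0=1$ and $K_{i+1}/K_{i}=K(G/K_{i})$ for $i\ge 0$. This ascending chain stabilizes; $K_\infty$ denotes its terminal term. *)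

theory Defs
  imports "HOL-Algebra.Coset" "Jordan_Normal_Form.Matrix"
begin

definition mat_trace :: "complex mat \<Rightarrow> complex" where
  "mat_trace A = (\<Sum>i<dim_row A. A $$ (i, i))"

definition is_rep :: "('a, 'b) monoid_scheme \<Rightarrow> nat \<Rightarrow> ('a \<Rightarrow> complex mat) \<Rightarrow> bool" where
  "is_rep G n \<rho> \<longleftrightarrow>
     (\<forall>g \<in> carrier G. \<rho> g \<in> carrier_mat n n) \<and>
     \<rho> \<one>\<^bsub>G\<^esub> = 1\<^sub>m n \<and>
     (\<forall>g \<in> carrier G. \<forall>h \<in> carrier G. \<rho> (g \<otimes>\<^bsub>G\<^esub> h) = \<rho> g * \<rho> h)"

definition invariant_subspace :: "('a, 'b) monoid_scheme \<Rightarrow> nat \<Rightarrow> ('a \<Rightarrow> complex mat) \<Rightarrow> complex vec set \<Rightarrow> bool" where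
  "invariant_subspace G n \<rho> W \<longleftrightarrow>
     W \<subseteq> carrier_vec n \<and> 0\<^sub>v n \<in> W \<and>
     (\<forall>v \<in> W. \<forall>w \<in> W. v + w \<in> W) \<and>
     (\<forall>c. \<forall>v \<in> W. c \<cdot>\<^sub>v v \<in> W) \<and>
     (\<forall>g \<in> carrier G. \<forall>v \<in> W. \<rho> g *\<^sub>v v \<in> W)"

definition irreducible_rep :: "('a, 'b) monoid_scheme \<Rightarrow> nat \<Rightarrow> ('a \<Rightarrow> complex mat) \<Rightarrow> bool" where
  "irreducible_rep G n \<rho> \<longleftrightarrow> is_rep G n \<rho> \<and> 0 < n \<and>
     (\<forall>W. invariant_subspace G n \<rho> W \<longrightarrow> W = {0\<^sub>v n} \<or> W = carrier_vec n)"

definition Irr :: "('a, 'b) monoid_scheme \<Rightarrow> ('a \<Rightarrow> complex) set" where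
  "Irr G = {\<chi>. \<exists>n \<rho>. irreducible_rep G n \<rho> \<and> \<chi> = (\<lambda>g \<in> carrier G. mat_trace (\<rho> g))}"

definition char_kernel :: "('a, 'b) monoid_scheme \<Rightarrow> ('a \<Rightarrow> complex) \<Rightarrow> 'a set" where
  "char_kernel G \<chi> = {g \<in> carrier G. \<chi> g = \<chi> \<one>\<^bsub>G\<^esub>}"

definition char_center :: "('a, 'b) monoid_scheme \<Rightarrow> ('a \<Rightarrow> complex) \<Rightarrow> 'a set" where
  "char_center G \<chi> = {g \<in> carrier G. cmod (\<chi> g) = cmod (\<chi> \<one>\<^bsub>G\<^esub>)}"

definition group_center :: "('a, 'b) monoid_scheme \<Rightarrow> 'a set" where
  "group_center G = {z \<in> carrier G. \<forall>g \<in> carrier G. z \<otimes>\<^bsub>G\<^esub> g = g \<otimes>\<^bsub>G\<^esub> z}"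

definition nested :: "('a, 'b) monoid_scheme \<Rightarrow> bool" where
  "nested G \<longleftrightarrow> (\<forall>\<chi> \<in> Irr G. \<forall>\<psi> \<in> Irr G.
      char_center G \<chi> \<subseteq> char_center G \<psi> \<or> char_center G \<psi> \<subseteq> char_center G \<chi>)"

definition is_abelian :: "('a, 'b) monoid_scheme \<Rightarrow> bool" where
  "is_abelian G \<longleftrightarrow> (\<forall>x \<in> carrier G. \<forall>y \<in> carrier G. x \<otimes>\<^bsub>G\<^esub> y = y \<otimes>\<^bsub>G\<^esub> x)"

text \<open>K(H): intersection of the kernels of all chi in Irr(H) with Z(chi) > Z(H);
  H itself if H is abelian (the empty intersection is also H).\<close>
definition K_sub :: "('a, 'b) monoid_scheme \<Rightarrow> 'a set" where
  "K_sub H = (if is_abelian H then carrier H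
     else carrier H \<inter> (\<Inter>\<chi> \<in> {\<chi> \<in> Irr H. group_center H \<subset> char_center H \<chi>}. char_kernel H \<chi>))"

text \<open>K_0 = 1, and K_{i+1} is the preimage in G of K(G/K_i), i.e. the union of the
  cosets of K_i lying in K(G/K_i).\<close>
primrec K_chain :: "('a, 'b) monoid_scheme \<Rightarrow> nat \<Rightarrow> 'a set" where
  "K_chain G 0 = {\<one>\<^bsub>G\<^esub>}"
| "K_chain G (Suc i) = \<Union> (K_sub (G Mod K_chain G i))"

text \<open>The terminal term of the ascending chain (K_i).\<close>
definition K_infty :: "('a, 'b) monoid_scheme \<Rightarrow> 'a set" where
  "K_infty G = (\<Union>i. K_chain G i)"

end

theory Submission
  imports Defs "Jordan_Normal_Form.Schur_Decomposition" "HOL-Algebra.Multiplicative_Group"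
begin

lemma mat_trace_comm:
  fixes X Y :: "complex mat"
  assumes "X \<in> carrier_mat n n" "Y \<in> carrier_mat n n"
  shows "mat_trace (X*Y) = mat_trace (Y*X)"
proof -
  have "mat_trace (X*Y) = (\<Sum>i<n. \<Sum>l<n. X$$(i,l) * Y$$(l,i))"
    using assms unfolding mat_trace_def
    by (auto simp: scalar_prod_def atLeast0LessThan intro!: sum.cong)
  also have "\<dots> = (\<Sum>l<n. \<Sum>i<n. Y$$(l,i) * X$$(i,l))"
    by (subst sum.swap) (simp add: mult.commute)
  also have "\<dots> = mat_trace (Y*X)"
    using assms unfolding mat_trace_def
    by (auto simp: scalar_prod_def atLeast0LessThan intro!: sum.cong)
  finally show ?thesis .
qed

definition utd :: "nat \<Rightarrow> complex mat \<Rightarrow> bool" where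
  "utd d M \<longleftrightarrow> (\<forall>i<dim_row M. \<forall>j<dim_col M. j < i + d \<longrightarrow> M$$(i,j) = 0)"

lemma utd_mult:
  assumes M: "M \<in> carrier_mat n n" and M': "M' \<in> carrier_mat n n"
    and "utd d M" "utd e M'"
  shows "utd (d+e) (M*M')"
proof -
  { fix i j assume ij: "i < n" "j < n" "j < i + (d+e)"
    have "(M*M')$$(i,j) = (\<Sum>l<n. M$$(i,l) * M'$$(l,j))"
      using M M' ij by (auto simp: scalar_prod_def atLeast0LessThan intro!: sum.cong)
    also have "\<dots> = 0"
    proof (rule sum.neutral, intro ballI)
      fix l assume l: "l \<in> {..<n}"
      show "M$$(i,l) * M'$$(l,j) = 0"
      proof (cases "l < i + d")
        case True then show ?thesis using assms ij l unfolding utd_def by auto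
      next
        case False then have "j < l + e" using ij by auto
        then show ?thesis using assms ij l unfolding utd_def by auto
      qed
    qed
    finally have "(M*M')$$(i,j) = 0" . }
  then show ?thesis using M M' unfolding utd_def by auto
qed

lemma utd_pow:
  assumes N: "N \<in> carrier_mat n n" and u: "utd 1 N"
  shows "utd k (N ^\<^sub>m k)"
proof (induction k)
  case 0 then show ?case unfolding utd_def by auto
next
  case (Suc k)
  have "utd (k+1) (N ^\<^sub>m k * N)"
    by (rule utd_mult[OF _ N Suc u]) (use N in auto)
  then show ?case by simp
qed

lemma nilpotent_ut:
  assumes N: "N \<in> carrier_mat n n" and u: "utd 1 N"
  shows "N ^\<^sub>m n = 0\<^sub>m n n"
proof -
  have "utd n (N ^\<^sub>m n)" by (rule utd_pow[OF N u])
  then show ?thesis using N unfolding utd_def by (auto intro!: eq_matI)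
qed

lemma descent_step:
  fixes B N :: "complex mat" and lam :: complex
  assumes B: "B \<in> carrier_mat n n" and Ndef: "N = B - lam \<cdot>\<^sub>m 1\<^sub>m n"
    and Bm: "B ^\<^sub>m m = 1\<^sub>m n" and lm: "lam ^ m = 1" and m: "m > 0"
    and z: "N ^\<^sub>m (Suc (Suc k)) = 0\<^sub>m n n"
  shows "N ^\<^sub>m (Suc k) = 0\<^sub>m n n"
proof -
  have N: "N \<in> carrier_mat n n" using B Ndef by auto
  have BN: "B = lam \<cdot>\<^sub>m 1\<^sub>m n + N" using B Ndef by (auto intro!: eq_matI)
  define X where "X = N ^\<^sub>m k"
  define Y where "Y = N ^\<^sub>m (Suc k)"
  have X: "X \<in> carrier_mat n n" and Y: "Y \<in> carrier_mat n n" using N X_def Y_def by auto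
  have YX: "Y = X * N" unfolding X_def Y_def by simp
  have YN: "Y * N = 0\<^sub>m n n" using z unfolding Y_def by simp
  have claim: "X * B ^\<^sub>m j = lam ^ j \<cdot>\<^sub>m X + (of_nat j * lam ^ (j - 1)) \<cdot>\<^sub>m Y" for j
  proof (induction j)
    case 0 then show ?case using X Y B by (auto intro!: eq_matI)
  next
    case (Suc j)
    have "X * B ^\<^sub>m Suc j = (X * B ^\<^sub>m j) * B" using X B by (simp add: assoc_mult_mat[of X n n "B ^\<^sub>m j" n B n])
    also have "\<dots> = (lam ^ j \<cdot>\<^sub>m X + (of_nat j * lam ^ (j - 1)) \<cdot>\<^sub>m Y) * (lam \<cdot>\<^sub>m 1\<^sub>m n + N)"
      using Suc BN by simp
    also have "\<dots> = lam ^ j \<cdot>\<^sub>m (lam \<cdot>\<^sub>m X) + lam ^ j \<cdot>\<^sub>m Y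
        + (of_nat j * lam ^ (j - 1)) \<cdot>\<^sub>m (lam \<cdot>\<^sub>m Y) + (of_nat j * lam ^ (j - 1)) \<cdot>\<^sub>m (Y * N)"
      using X Y N YX[symmetric]
      by (simp add: add_mult_distrib_mat[where nr=n and n=n and nc=n] mult_add_distrib_mat[where nr=n and n=n and nc=n]
            mult_smult_assoc_mat[where nr=n and n=n and nc=n] mult_smult_distrib[where nr=n and n=n and nc=n] assoc_mult_mat[of X n n N n]) (rule eq_matI, auto simp: algebra_simps)
    also have "\<dots> = lam ^ Suc j \<cdot>\<^sub>m X + (of_nat (Suc j) * lam ^ (Suc j - 1)) \<cdot>\<^sub>m Y"
    proof (rule eq_matI)
      fix i l assume il: "i < dim_row (lam ^ Suc j \<cdot>\<^sub>m X + (of_nat (Suc j) * lam ^ (Suc j - 1)) \<cdot>\<^sub>m Y)"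
        "l < dim_col (lam ^ Suc j \<cdot>\<^sub>m X + (of_nat (Suc j) * lam ^ (Suc j - 1)) \<cdot>\<^sub>m Y)"
      then have il': "i < n" "l < n" using X Y by auto
      show "(lam ^ j \<cdot>\<^sub>m (lam \<cdot>\<^sub>m X) + lam ^ j \<cdot>\<^sub>m Y
        + (of_nat j * lam ^ (j - 1)) \<cdot>\<^sub>m (lam \<cdot>\<^sub>m Y) + (of_nat j * lam ^ (j - 1)) \<cdot>\<^sub>m (Y * N)) $$ (i,l)
        = (lam ^ Suc j \<cdot>\<^sub>m X + (of_nat (Suc j) * lam ^ (Suc j - 1)) \<cdot>\<^sub>m Y) $$ (i,l)"
        using il' X Y YN
        by (cases j) (auto simp: algebra_simps)
    qed (use X Y YN in auto)
    finally show ?case .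
  qed
  from claim[of m] have eq: "X = lam ^ m \<cdot>\<^sub>m X + (of_nat m * lam ^ (m - 1)) \<cdot>\<^sub>m Y"
    using Bm X by simp
  have "lam \<noteq> 0"
  proof
    assume "lam = 0" then show False using lm m by (simp add: power_0_left)
  qed
  then have c: "of_nat m * lam ^ (m - 1) \<noteq> 0" using m by simp
  have "Y = 0\<^sub>m n n"
  proof (rule eq_matI)
    fix i j assume ij: "i < dim_row (0\<^sub>m n n :: complex mat)" "j < dim_col (0\<^sub>m n n :: complex mat)"
    have "X $$ (i,j) = (lam ^ m \<cdot>\<^sub>m X + (of_nat m * lam ^ (m - 1)) \<cdot>\<^sub>m Y) $$ (i,j)"
      using arg_cong[where f="\<lambda>M. M $$ (i,j)", OF eq] by simp
    then have "X $$ (i,j) = X $$ (i,j) + (of_nat m * lam ^ (m - 1)) * Y $$ (i,j)"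
      using ij X Y lm by simp
    then have "(of_nat m * lam ^ (m - 1)) * Y $$ (i,j) = 0" by simp
    then show "Y $$ (i,j) = 0\<^sub>m n n $$ (i,j)" using c ij by (simp del: of_nat_eq_0_iff mult_eq_0_iff)
  qed (use Y in auto)
  then show ?thesis unfolding Y_def .
qed

lemma re_eq_cmod_imp:
  fixes w :: complex
  assumes "Re w = 1" "cmod w = 1"
  shows "w = 1"
proof -
  have "(Re w)^2 + (Im w)^2 = 1" using assms(2) by (metis cmod_power2 one_power2)
  then have "Im w = 0" using assms(1) by simp
  then show ?thesis using assms(1) by (simp add: complex_eq_iff)
qed

lemma all_equal_unit:
  fixes z :: "nat \<Rightarrow> complex"
  assumes u: "\<And>i. i < n \<Longrightarrow> cmod (z i) = 1" and s: "cmod (\<Sum>i<n. z i) = real n" and n: "n > 0"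
  shows "\<And>i. i < n \<Longrightarrow> z i = (\<Sum>i<n. z i) / of_nat n"
proof -
  define S where "S = (\<Sum>i<n. z i)"
  define mu where "mu = cnj S / of_nat n"
  have Sn: "cmod S = real n" using s S_def by simp
  have mu1: "cmod mu = 1" using Sn n unfolding mu_def by (simp add: norm_divide)
  have le: "Re (mu * z i) \<le> 1" if "i < n" for i
    using complex_Re_le_cmod[of "mu * z i"] u[OF that] mu1 by (simp add: norm_mult)
  have "(\<Sum>i<n. Re (mu * z i)) = Re (mu * S)"
    unfolding S_def by (simp add: sum_distrib_left)
  also have "mu * S = of_real ((cmod S)^2) / of_nat n"
    unfolding mu_def complex_norm_square by (simp add: mult.commute)
  also have "\<dots> = of_real ((cmod S)^2 / real n)" by simp
  also have "Re \<dots> = real n" using Sn n by (simp add: power2_eq_square)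
  finally have sumeq: "(\<Sum>i<n. Re (mu * z i)) = real n" .
  have "(\<Sum>i<n. 1 - Re (mu * z i)) = 0" using sumeq by (simp add: sum_subtractf)
  then have "\<forall>i\<in>{..<n}. 1 - Re (mu * z i) = 0"
    by (subst sum_nonneg_eq_0_iff[symmetric]) (use le in auto)
  then have one: "mu * z i = 1" if "i < n" for i
    using re_eq_cmod_imp[of "mu * z i"] that u[OF that] mu1 by (simp add: norm_mult)
  fix i assume i: "i < n"
  have "S \<noteq> 0" using Sn n by auto
  then have cS: "cnj S \<noteq> 0" by simp
  have mu0: "mu \<noteq> 0" using mu1 by auto
  have nn: "S * cnj S = of_nat n * of_nat n"
    using Sn complex_norm_square[of S] by (simp add: power2_eq_square)
  have "z i = 1 / mu" using one[OF i] mu0 by (simp add: eq_divide_eq mult.commute)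
  also have "\<dots> = of_nat n / cnj S" unfolding mu_def by simp
  also have "\<dots> = S / of_nat n" using cS n nn by (simp add: frac_eq_eq)
  finally show "z i = (\<Sum>i<n. z i) / of_nat n" unfolding S_def .
qed

lemma eig_root_unity:
  fixes A :: "complex mat"
  assumes A: "A \<in> carrier_mat n n" and Am: "A ^\<^sub>m m = 1\<^sub>m n" and ev: "eigenvalue A e"
  shows "e ^ m = 1"
proof -
  obtain v where v: "eigenvector A v e" using ev unfolding eigenvalue_def by auto
  have vc: "v \<in> carrier_vec n" and v0: "v \<noteq> 0\<^sub>v n" using v A unfolding eigenvector_def by auto
  have "A ^\<^sub>m m *\<^sub>v v = e ^ m \<cdot>\<^sub>v v" by (rule eigenvector_pow[OF A v])
  then have eq: "v = e ^ m \<cdot>\<^sub>v v" using Am vc by simp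
  obtain k where k: "k < n" "v $ k \<noteq> 0"
  proof (rule ccontr)
    assume "\<not> thesis"
    then have "\<forall>k<n. v $ k = 0" using that by blast
    then have "v = 0\<^sub>v n" using vc by (auto intro!: eq_vecI)
    then show False using v0 by simp
  qed
  have "v $ k = e ^ m * v $ k" using arg_cong[where f="\<lambda>w. w $ k", OF eq] k vc by simp
  then show ?thesis using k(2) by simp
qed

lemma cmod_root_unity:
  fixes e :: complex
  assumes "e ^ m = 1" "m > 0"
  shows "cmod e = 1"
proof -
  have "cmod e ^ m = 1" using assms by (metis norm_one norm_power)
  obtain k where k: "m = Suc k" using assms(2) gr0_implies_Suc by blast
  have "cmod e ^ Suc k = 1 ^ Suc k" using \<open>cmod e ^ m = 1\<close> k by simp
  then show ?thesis by (rule power_inject_base) auto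
qed

lemma sim_back:
  fixes P Q X :: "'a :: comm_ring_1 mat"
  assumes P: "P \<in> carrier_mat n n" and Q: "Q \<in> carrier_mat n n" and X: "X \<in> carrier_mat n n"
    and QP: "Q * P = 1\<^sub>m n"
  shows "Q * (P * X * Q) * P = X"
proof -
  have "Q * (P * X * Q) * P = Q * ((P * X * Q) * P)"
    by (rule assoc_mult_mat[of Q n n _ n P n]) (use P Q X in auto)
  also have "(P * X * Q) * P = (P * X) * (Q * P)"
    by (rule assoc_mult_mat[of "P * X" n n Q n P n]) (use P Q X in auto)
  also have "\<dots> = P * X" using QP P X by simp
  also have "Q * (P * X) = (Q * P) * X"
    by (rule assoc_mult_mat[of Q n n P n X n, symmetric]) (use P Q X in auto)
  also have "\<dots> = X" using QP X by simp
  finally show ?thesis .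
qed

lemma scalar_of_finite_order:
  fixes A :: "complex mat"
  assumes A: "A \<in> carrier_mat n n" and m: "m > 0" and Am: "A ^\<^sub>m m = 1\<^sub>m n"
    and tr: "cmod (mat_trace A) = real n"
  shows "\<exists>lam. A = lam \<cdot>\<^sub>m 1\<^sub>m n \<and> lam ^ m = 1"
proof (cases "n = 0")
  case True
  then show ?thesis using A by (intro exI[of _ 1]) (auto intro!: eq_matI)
next
  case False
  then have n: "n > 0" by simp
  obtain es where cp: "char_poly A = (\<Prod>a\<leftarrow>es. [:- a, 1:])" and len: "length es = n"
    using char_poly_factorized[OF A] by blast
  obtain B P Q where sd: "schur_decomposition A es = (B,P,Q)" by (cases "schur_decomposition A es") auto
  from schur_decomposition[OF A cp sd] have sim: "similar_mat_wit A B P Q"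
    and ut: "upper_triangular B" and dg: "diag_mat B = es" by auto
  note sD = similar_mat_witD2[OF A sim]
  have B: "B \<in> carrier_mat n n" and P: "P \<in> carrier_mat n n" and Q: "Q \<in> carrier_mat n n"
    and PQ: "P * Q = 1\<^sub>m n" and QP: "Q * P = 1\<^sub>m n" and APBQ: "A = P * B * Q" using sD by auto
  have diag: "B $$ (i,i) = es ! i" if "i < n" for i
    using dg that B unfolding diag_mat_def by auto
  have evs: "e ^ m = 1" if "e \<in> set es" for e
  proof -
    have "poly (char_poly A) e = 0" unfolding cp using that
      by (auto simp: poly_prod_list prod_list_zero_iff)
    then have "eigenvalue A e" using eigenvalue_root_char_poly[OF A] by simp
    then show ?thesis by (rule eig_root_unity[OF A Am])
  qed
  define z where "z i = B $$ (i,i)" for i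
  have zu: "z i ^ m = 1" if "i < n" for i using evs[of "es ! i"] diag[OF that] len that z_def by simp
  have zc: "cmod (z i) = 1" if "i < n" for i using cmod_root_unity[OF zu[OF that] m] .
  have "mat_trace A = mat_trace (P * (B * Q))" using APBQ P B Q by simp
  also have "\<dots> = mat_trace ((B * Q) * P)" by (rule mat_trace_comm[OF P]) (use B Q in auto)
  also have "(B * Q) * P = B" using B Q P QP by simp
  also have "mat_trace B = (\<Sum>i<n. z i)" unfolding mat_trace_def z_def using B by simp
  finally have trz: "mat_trace A = (\<Sum>i<n. z i)" .
  define lam where "lam = (\<Sum>i<n. z i) / of_nat n"
  have zl: "z i = lam" if "i < n" for i
    using all_equal_unit[of n z, OF zc _ n that] tr trz lam_def by simp
  have lm: "lam ^ m = 1" using zu[OF n] zl[OF n] by simp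
  define N where "N = B - lam \<cdot>\<^sub>m 1\<^sub>m n"
  have Nc: "N \<in> carrier_mat n n" using B N_def by auto
  have u1: "utd 1 N" unfolding utd_def N_def using B ut zl unfolding upper_triangular_def z_def
    by (auto simp: less_Suc_eq)
  have Nn: "N ^\<^sub>m n = 0\<^sub>m n n" by (rule nilpotent_ut[OF Nc u1])
  have Bm: "B ^\<^sub>m m = 1\<^sub>m n"
  proof -
    have Bmc: "B ^\<^sub>m m \<in> carrier_mat n n" using B by simp
    have "A ^\<^sub>m m = P * B ^\<^sub>m m * Q" by (rule similar_mat_wit_pow_id[OF sim])
    then have "Q * (A ^\<^sub>m m) * P = Q * (P * B ^\<^sub>m m * Q) * P" by simp
    also have "\<dots> = B ^\<^sub>m m" by (rule sim_back[OF P Q Bmc QP])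
    finally show ?thesis using Am Q P QP by simp
  qed
  have desc: "N ^\<^sub>m (Suc k) = 0\<^sub>m n n \<Longrightarrow> N ^\<^sub>m 1 = 0\<^sub>m n n" for k
  proof (induction k)
    case 0 then show ?case by simp
  next
    case (Suc k)
    show ?case using descent_step[OF B N_def Bm lm m, of k] Suc by simp
  qed
  have "N = 0\<^sub>m n n" using desc[of "n - 1"] Nn n Nc by simp
  then have N0: "\<And>i j. i < n \<Longrightarrow> j < n \<Longrightarrow> (B - lam \<cdot>\<^sub>m 1\<^sub>m n) $$ (i,j) = 0"
    unfolding N_def by simp
  have "B = lam \<cdot>\<^sub>m 1\<^sub>m n"
  proof (rule eq_matI)
    fix i j assume "i < dim_row (lam \<cdot>\<^sub>m 1\<^sub>m n)" "j < dim_col (lam \<cdot>\<^sub>m (1\<^sub>m n :: complex mat))"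
    then have ij: "i < n" "j < n" by auto
    show "B $$ (i,j) = (lam \<cdot>\<^sub>m 1\<^sub>m n) $$ (i,j)" using N0[OF ij] B ij by auto
  qed (use B in auto)
  then have "A = lam \<cdot>\<^sub>m 1\<^sub>m n" using APBQ P Q PQ
    by (simp add: mult_smult_distrib[of P n n _ n] mult_smult_assoc_mat[of _ n n Q n])
  then show ?thesis using lm by blast
qed

lemma mat_trace_one: "mat_trace (1\<^sub>m n) = of_nat n"
  unfolding mat_trace_def by simp

lemma mat_trace_smult_one: "mat_trace (c \<cdot>\<^sub>m 1\<^sub>m n) = c * of_nat n"
  unfolding mat_trace_def by simp

lemma IrrE:
  assumes "\<chi> \<in> Irr G"
  obtains n \<rho> where "irreducible_rep G n \<rho>" "\<chi> = (\<lambda>g \<in> carrier G. mat_trace (\<rho> g))"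
  using assms unfolding Irr_def by blast

lemma irr_repD:
  assumes "irreducible_rep G n \<rho>"
  shows "\<And>g. g \<in> carrier G \<Longrightarrow> \<rho> g \<in> carrier_mat n n" "\<rho> \<one>\<^bsub>G\<^esub> = 1\<^sub>m n"
    "\<And>g h. g \<in> carrier G \<Longrightarrow> h \<in> carrier G \<Longrightarrow> \<rho> (g \<otimes>\<^bsub>G\<^esub> h) = \<rho> g * \<rho> h" "n > 0"
  using assms unfolding irreducible_rep_def is_rep_def by auto

lemma (in group) rep_pow:
  assumes r: "irreducible_rep G n \<rho>" and g: "g \<in> carrier G"
  shows "\<rho> (g [^] (k::nat)) = \<rho> g ^\<^sub>m k"
proof (induction k)
  case 0
  have "dim_row (\<rho> g) = n" using irr_repD(1)[OF r g] by simp
  then show ?case using irr_repD[OF r] g by simp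
next
  case (Suc k)
  then show ?case using irr_repD(3)[OF r, of "g [^] k" g] g by simp
qed

lemma (in group) rep_ord:
  assumes fin: "finite (carrier G)" and r: "irreducible_rep G n \<rho>" and g: "g \<in> carrier G"
  shows "\<rho> g ^\<^sub>m (ord g) = 1\<^sub>m n" "ord g > 0"
proof -
  show "\<rho> g ^\<^sub>m (ord g) = 1\<^sub>m n" using rep_pow[OF r g, of "ord g", symmetric] g irr_repD[OF r] by simp
  show "ord g > 0" using ord_ge_1[OF fin g] by simp
qed

lemma (in group) rep_scalar:
  assumes fin: "finite (carrier G)" and r: "irreducible_rep G n \<rho>" and g: "g \<in> carrier G"
    and c: "cmod (mat_trace (\<rho> g)) = real n"
  shows "\<exists>lam. \<rho> g = lam \<cdot>\<^sub>m 1\<^sub>m n \<and> cmod lam = 1"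
proof -
  obtain lam where l: "\<rho> g = lam \<cdot>\<^sub>m 1\<^sub>m n" "lam ^ ord g = 1"
    using scalar_of_finite_order[OF irr_repD(1)[OF r g] rep_ord(2)[OF fin r g] rep_ord(1)[OF fin r g] c]
    by blast
  then show ?thesis using cmod_root_unity[OF l(2) rep_ord(2)[OF fin r g]] by blast
qed

lemma (in group) rep_kernel:
  assumes fin: "finite (carrier G)" and r: "irreducible_rep G n \<rho>" and g: "g \<in> carrier G"
    and c: "mat_trace (\<rho> g) = of_nat n"
  shows "\<rho> g = 1\<^sub>m n"
proof -
  obtain lam where l: "\<rho> g = lam \<cdot>\<^sub>m 1\<^sub>m n"
    using rep_scalar[OF fin r g] c by auto
  then have "lam * of_nat n = of_nat n" using c mat_trace_smult_one by metis
  then have "lam = 1" using irr_repD(4)[OF r] by simp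
  then show ?thesis using l by (auto intro!: eq_matI)
qed

lemma (in group) rep_schur:
  assumes fin: "finite (carrier G)" and r: "irreducible_rep G n \<rho>" and g: "g \<in> carrier G"
    and cen: "\<And>h. h \<in> carrier G \<Longrightarrow> g \<otimes> h = h \<otimes> g"
  shows "cmod (mat_trace (\<rho> g)) = real n"
proof -
  note rD = irr_repD[OF r]
  have A: "\<rho> g \<in> carrier_mat n n" using rD g by auto
  obtain es where cp: "char_poly (\<rho> g) = (\<Prod>a\<leftarrow>es. [:- a, 1:])" and len: "length es = n"
    using char_poly_factorized[OF A] by blast
  define e where "e = es ! 0"
  have "e \<in> set es" using len rD(4) e_def by auto
  then have "poly (char_poly (\<rho> g)) e = 0" unfolding cp
    by (auto simp: poly_prod_list prod_list_zero_iff)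
  then have ev: "eigenvalue (\<rho> g) e" using eigenvalue_root_char_poly[OF A] by simp
  then obtain v where v: "eigenvector (\<rho> g) v e" unfolding eigenvalue_def by auto
  have vc: "v \<in> carrier_vec n" and v0: "v \<noteq> 0\<^sub>v n" and ve: "\<rho> g *\<^sub>v v = e \<cdot>\<^sub>v v"
    using v A unfolding eigenvector_def by auto
  define W where "W = {w \<in> carrier_vec n. \<rho> g *\<^sub>v w = e \<cdot>\<^sub>v w}"
  have inv: "invariant_subspace G n \<rho> W"
    unfolding invariant_subspace_def
  proof (intro conjI ballI allI)
    show "W \<subseteq> carrier_vec n" unfolding W_def by auto
    show "0\<^sub>v n \<in> W" unfolding W_def using A by auto
  next
    fix x y assume "x \<in> W" "y \<in> W"
    then show "x + y \<in> W" unfolding W_def using A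
      by (auto simp: mult_add_distrib_mat_vec[OF A] smult_add_distrib_vec)
  next
    fix c x assume "x \<in> W"
    then show "c \<cdot>\<^sub>v x \<in> W" unfolding W_def using A
      by (auto simp: mult_mat_vec smult_smult_assoc mult.commute)
  next
    fix h x assume h: "h \<in> carrier G" and x: "x \<in> W"
    have H: "\<rho> h \<in> carrier_mat n n" using rD h by auto
    have "\<rho> g *\<^sub>v (\<rho> h *\<^sub>v x) = (\<rho> g * \<rho> h) *\<^sub>v x" using A H x W_def by auto
    also have "\<rho> g * \<rho> h = \<rho> h * \<rho> g" using rD(3) g h cen[OF h] by metis
    also have "(\<rho> h * \<rho> g) *\<^sub>v x = \<rho> h *\<^sub>v (e \<cdot>\<^sub>v x)" using A H x W_def by auto
    also have "\<dots> = e \<cdot>\<^sub>v (\<rho> h *\<^sub>v x)" using H x W_def by (auto simp: mult_mat_vec)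
    finally show "\<rho> h *\<^sub>v x \<in> W" unfolding W_def using H x W_def by auto
  qed
  have "v \<in> W" unfolding W_def using vc ve by auto
  then have "W = carrier_vec n" using r inv v0 unfolding irreducible_rep_def by auto
  then have allw: "\<And>w. w \<in> carrier_vec n \<Longrightarrow> \<rho> g *\<^sub>v w = e \<cdot>\<^sub>v w" unfolding W_def by auto
  have sc: "\<rho> g = e \<cdot>\<^sub>m 1\<^sub>m n"
  proof (rule eq_matI)
    fix i j assume ij: "i < dim_row (e \<cdot>\<^sub>m 1\<^sub>m n)" "j < dim_col (e \<cdot>\<^sub>m (1\<^sub>m n :: complex mat))"
    then have ij': "i < n" "j < n" by auto
    have "(\<rho> g *\<^sub>v unit_vec n j) $ i = (e \<cdot>\<^sub>v unit_vec n j) $ i" using allw[of "unit_vec n j"] by simp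
    then show "\<rho> g $$ (i,j) = (e \<cdot>\<^sub>m 1\<^sub>m n) $$ (i,j)" using A ij'
      by auto
  qed (use A in auto)
  have "e ^ ord g = 1" by (rule eig_root_unity[OF A rep_ord(1)[OF fin r g] ev])
  then have "cmod e = 1" using cmod_root_unity rep_ord(2)[OF fin r g] by blast
  then show ?thesis using sc mat_trace_smult_one by (simp add: norm_mult)
qed

lemma (in group) char_one_val:
  assumes r: "irreducible_rep G n \<rho>" and chi: "\<chi> = (\<lambda>g \<in> carrier G. mat_trace (\<rho> g))"
  shows "\<chi> \<one> = of_nat n"
  using irr_repD[OF r] chi by (simp add: mat_trace_one)

lemma (in group) char_kernel_rep:
  assumes fin: "finite (carrier G)" and r: "irreducible_rep G n \<rho>"
    and chi: "\<chi> = (\<lambda>g \<in> carrier G. mat_trace (\<rho> g))"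
  shows "char_kernel G \<chi> = {g \<in> carrier G. \<rho> g = 1\<^sub>m n}"
proof -
  have c1: "\<chi> \<one> = of_nat n" by (rule char_one_val[OF r chi])
  { fix g assume g: "g \<in> carrier G"
    have "\<chi> g = of_nat n \<longleftrightarrow> \<rho> g = 1\<^sub>m n"
    proof
      assume "\<chi> g = of_nat n" then have "mat_trace (\<rho> g) = of_nat n" using chi g by simp
      then show "\<rho> g = 1\<^sub>m n" by (rule rep_kernel[OF fin r g])
    next
      assume "\<rho> g = 1\<^sub>m n" then show "\<chi> g = of_nat n" using chi g by (simp add: mat_trace_one)
    qed }
  then show ?thesis unfolding char_kernel_def c1 by blast
qed

lemma (in group) rep_inv:
  assumes r: "irreducible_rep G n \<rho>" and g: "g \<in> carrier G"
  shows "\<rho> (inv g) * \<rho> g = 1\<^sub>m n" "\<rho> g * \<rho> (inv g) = 1\<^sub>m n"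
  using irr_repD(3)[OF r, of "inv g" g] irr_repD(3)[OF r, of g "inv g"] irr_repD(2)[OF r] g by auto

lemma (in group) char_kernel_normal:
  assumes fin: "finite (carrier G)" and chi: "\<chi> \<in> Irr G"
  shows "char_kernel G \<chi> \<lhd> G"
proof -
  obtain n \<rho> where r: "irreducible_rep G n \<rho>" and c: "\<chi> = (\<lambda>g \<in> carrier G. mat_trace (\<rho> g))"
    using chi by (rule IrrE)
  note rD = irr_repD[OF r]
  have K: "char_kernel G \<chi> = {g \<in> carrier G. \<rho> g = 1\<^sub>m n}" by (rule char_kernel_rep[OF fin r c])
  show ?thesis unfolding K normal_inv_iff
  proof (intro conjI subgroupI ballI)
    have "\<one> \<in> {g \<in> carrier G. \<rho> g = 1\<^sub>m n}" using rD(2) by simp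
    then show "{g \<in> carrier G. \<rho> g = 1\<^sub>m n} \<noteq> {}" by blast
  next
    fix a assume a: "a \<in> {g \<in> carrier G. \<rho> g = 1\<^sub>m n}"
    have "\<rho> (inv a) = \<rho> (inv a) * \<rho> a" using a rD(1)[of "inv a"] by auto
    also have "\<dots> = 1\<^sub>m n" using rep_inv(1)[OF r, of a] a by blast
    finally show "inv a \<in> {g \<in> carrier G. \<rho> g = 1\<^sub>m n}" using a by auto
  next
    fix a b assume "a \<in> {g \<in> carrier G. \<rho> g = 1\<^sub>m n}" "b \<in> {g \<in> carrier G. \<rho> g = 1\<^sub>m n}"
    then show "a \<otimes> b \<in> {g \<in> carrier G. \<rho> g = 1\<^sub>m n}" using rD(3)[of a b] by simp
  next
    fix x h assume x: "x \<in> carrier G" and h: "h \<in> {g \<in> carrier G. \<rho> g = 1\<^sub>m n}"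
    have hc: "h \<in> carrier G" using h by simp
    have "\<rho> (x \<otimes> h \<otimes> inv x) = \<rho> x * \<rho> h * \<rho> (inv x)"
      using rD(3)[of "x \<otimes> h" "inv x"] rD(3)[of x h] x hc by simp
    also have "\<dots> = \<rho> x * \<rho> (inv x)" using h x rD(1)[of x] by simp
    also have "\<dots> = 1\<^sub>m n" using rep_inv[OF r x] by simp
    finally show "x \<otimes> h \<otimes> inv x \<in> {g \<in> carrier G. \<rho> g = 1\<^sub>m n}" using x h by auto
  next
    show "{g \<in> carrier G. \<rho> g = 1\<^sub>m n} \<subseteq> carrier G" by blast
  qed
qed

lemma (in group) char_center_comm:
  assumes fin: "finite (carrier G)" and chi: "\<chi> \<in> Irr G"
    and a: "a \<in> char_center G \<chi>" and b: "b \<in> carrier G"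
  shows "a \<otimes> b \<otimes> inv (b \<otimes> a) \<in> char_kernel G \<chi>"
proof -
  obtain n \<rho> where r: "irreducible_rep G n \<rho>" and c: "\<chi> = (\<lambda>g \<in> carrier G. mat_trace (\<rho> g))"
    using chi by (rule IrrE)
  note rD = irr_repD[OF r]
  have K: "char_kernel G \<chi> = {g \<in> carrier G. \<rho> g = 1\<^sub>m n}" by (rule char_kernel_rep[OF fin r c])
  have ac: "a \<in> carrier G" and "cmod (\<chi> a) = cmod (\<chi> \<one>)" using a unfolding char_center_def by auto
  then have "cmod (mat_trace (\<rho> a)) = real n" using char_one_val[OF r c] c by simp
  then obtain lam where l: "\<rho> a = lam \<cdot>\<^sub>m 1\<^sub>m n" using rep_scalar[OF fin r ac] by blast
  have B: "\<rho> b \<in> carrier_mat n n" using rD b by auto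
  have "\<rho> (a \<otimes> b) = \<rho> (b \<otimes> a)"
    using rD(3)[OF ac b] rD(3)[OF b ac] l B
    by (simp add: mult_smult_assoc_mat[of _ n n _ n] mult_smult_distrib[of _ n n _ n])
  then have "\<rho> (a \<otimes> b \<otimes> inv (b \<otimes> a)) = \<rho> (b \<otimes> a) * \<rho> (inv (b \<otimes> a))"
    using rD ac b by simp
  also have "\<dots> = 1\<^sub>m n" using rep_inv[OF r, of "b \<otimes> a"] ac b by simp
  finally show ?thesis unfolding K using ac b by simp
qed

lemma (in group) center_sub_char_center:
  assumes fin: "finite (carrier G)" and chi: "\<chi> \<in> Irr G"
  shows "group_center G \<subseteq> char_center G \<chi>"
proof
  fix g assume g: "g \<in> group_center G"
  obtain n \<rho> where r: "irreducible_rep G n \<rho>" and c: "\<chi> = (\<lambda>g \<in> carrier G. mat_trace (\<rho> g))"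
    using chi by (rule IrrE)
  have gc: "g \<in> carrier G" and cen: "\<And>h. h \<in> carrier G \<Longrightarrow> g \<otimes> h = h \<otimes> g"
    using g unfolding group_center_def by auto
  have "cmod (mat_trace (\<rho> g)) = real n" by (rule rep_schur[OF fin r gc cen])
  then show "g \<in> char_center G \<chi>" unfolding char_center_def using gc c char_one_val[OF r c] by simp
qed

lemma (in group) normal_Inter:
  assumes "\<And>N. N \<in> NN \<Longrightarrow> N \<lhd> G"
  shows "carrier G \<inter> \<Inter> NN \<lhd> G"
  unfolding normal_inv_iff
proof (intro conjI subgroupI ballI)
  have "\<one> \<in> N" if "N \<in> NN" for N using subgroup.one_closed[OF normal_imp_subgroup[OF assms[OF that]]] .
  then show "carrier G \<inter> \<Inter> NN \<noteq> {}" by blast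
next
  fix a assume a: "a \<in> carrier G \<inter> \<Inter> NN"
  have "inv a \<in> N" if "N \<in> NN" for N
    using subgroup.m_inv_closed[OF normal_imp_subgroup[OF assms[OF that]]] a that by blast
  then show "inv a \<in> carrier G \<inter> \<Inter> NN" using a by blast
next
  fix a b assume a: "a \<in> carrier G \<inter> \<Inter> NN" and b: "b \<in> carrier G \<inter> \<Inter> NN"
  have "a \<otimes> b \<in> N" if "N \<in> NN" for N
    using subgroup.m_closed[OF normal_imp_subgroup[OF assms[OF that]]] a b that by blast
  then show "a \<otimes> b \<in> carrier G \<inter> \<Inter> NN" using a b by blast
next
  fix x h assume x: "x \<in> carrier G" and h: "h \<in> carrier G \<inter> \<Inter> NN"
  have "x \<otimes> h \<otimes> inv x \<in> N" if "N \<in> NN" for N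
    using normal.inv_op_closed2[OF assms[OF that] x] h that by blast
  then show "x \<otimes> h \<otimes> inv x \<in> carrier G \<inter> \<Inter> NN" using x h by blast
next
  show "carrier G \<inter> \<Inter> NN \<subseteq> carrier G" by blast
qed

lemma (in group) K_sub_normal:
  assumes fin: "finite (carrier G)"
  shows "K_sub G \<lhd> G"
proof (cases "is_abelian G")
  case True
  have "carrier G \<inter> \<Inter> {} \<lhd> G" by (rule normal_Inter) auto
  then show ?thesis using True unfolding K_sub_def by simp
next
  case False
  have "carrier G \<inter> \<Inter> (char_kernel G ` {\<chi> \<in> Irr G. group_center G \<subset> char_center G \<chi>}) \<lhd> G"
    by (rule normal_Inter) (use char_kernel_normal[OF fin] in auto)
  then show ?thesis using False unfolding K_sub_def by simp
qed

definition infl :: "('a, 'b) monoid_scheme \<Rightarrow> 'a set \<Rightarrow> ('a set \<Rightarrow> complex) \<Rightarrow> 'a \<Rightarrow> complex" where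
  "infl G N \<chi>' = (\<lambda>g \<in> carrier G. \<chi>' (N #>\<^bsub>G\<^esub> g))"

lemma inv_sub_image:
  assumes "\<rho> ` carrier G = \<rho>' ` carrier G'"
  shows "invariant_subspace G n \<rho> W \<longleftrightarrow> invariant_subspace G' n \<rho>' W"
proof -
  have e: "(\<forall>g\<in>carrier G. P (\<rho> g)) \<longleftrightarrow> (\<forall>g\<in>carrier G'. P (\<rho>' g))" for P
  proof -
    have "(\<forall>g\<in>carrier G. P (\<rho> g)) \<longleftrightarrow> (\<forall>M\<in>\<rho> ` carrier G. P M)" by blast
    also have "\<dots> \<longleftrightarrow> (\<forall>M\<in>\<rho>' ` carrier G'. P M)" using assms by simp
    also have "\<dots> \<longleftrightarrow> (\<forall>g\<in>carrier G'. P (\<rho>' g))" by blast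
    finally show ?thesis .
  qed
  show ?thesis unfolding invariant_subspace_def using e[of "\<lambda>M. \<forall>v\<in>W. M *\<^sub>v v \<in> W"] by simp
qed

lemma (in normal) mod_carrier: "carrier (G Mod H) = rcosets H"
  by (simp add: FactGroup_def)

lemma (in normal) rcosets_image: "(\<lambda>g. H #> g) ` carrier G = rcosets H"
  by (auto simp: RCOSETS_def)

lemma (in normal) rcos_in: "g \<in> carrier G \<Longrightarrow> H #> g \<in> carrier (G Mod H)"
  using rcosetsI subset by (simp add: mod_carrier)

lemma (in normal) rcos_one: "H #> \<one> = H"
  using coset_mult_one subset by simp

lemma (in normal) infl_rep:
  assumes r: "irreducible_rep (G Mod H) n \<rho>'"
  shows "irreducible_rep G n (\<lambda>g. \<rho>' (H #> g))"
proof -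
  note rD = irr_repD[OF r]
  have isr: "is_rep G n (\<lambda>g. \<rho>' (H #> g))"
    unfolding is_rep_def
  proof (intro conjI ballI)
    fix g assume "g \<in> carrier G" then show "\<rho>' (H #> g) \<in> carrier_mat n n" using rD rcos_in by auto
  next
    show "\<rho>' (H #> \<one>) = 1\<^sub>m n" using rD(2) rcos_one by simp
  next
    fix g h assume g: "g \<in> carrier G" and h: "h \<in> carrier G"
    have "\<rho>' (H #> (g \<otimes> h)) = \<rho>' ((H #> g) \<otimes>\<^bsub>G Mod H\<^esub> (H #> h))"
      using rcos_sum[OF g h] by simp
    also have "\<dots> = \<rho>' (H #> g) * \<rho>' (H #> h)" using rD(3) rcos_in g h by blast
    finally show "\<rho>' (H #> (g \<otimes> h)) = \<rho>' (H #> g) * \<rho>' (H #> h)" .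
  qed
  have im: "(\<lambda>g. \<rho>' (H #> g)) ` carrier G = \<rho>' ` carrier (G Mod H)"
    using rcosets_image mod_carrier by (metis image_image)
  show ?thesis using r isr inv_sub_image[OF im] unfolding irreducible_rep_def by simp
qed

lemma (in normal) infl_val: "g \<in> carrier G \<Longrightarrow> infl G H \<chi>' g = \<chi>' (H #> g)"
  unfolding infl_def by simp

lemma (in normal) infl_one: "infl G H \<chi>' \<one> = \<chi>' \<one>\<^bsub>G Mod H\<^esub>"
  unfolding infl_def using rcos_one by simp

lemma (in normal) infl_Irr:
  assumes "\<chi>' \<in> Irr (G Mod H)"
  shows "infl G H \<chi>' \<in> Irr G"
proof -
  obtain n \<rho>' where r: "irreducible_rep (G Mod H) n \<rho>'"
    and c: "\<chi>' = (\<lambda>C \<in> carrier (G Mod H). mat_trace (\<rho>' C))"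
    using assms by (rule IrrE)
  have "infl G H \<chi>' = (\<lambda>g \<in> carrier G. mat_trace (\<rho>' (H #> g)))"
    unfolding infl_def c using rcos_in by (auto intro!: restrict_ext)
  then show ?thesis using infl_rep[OF r] unfolding Irr_def by blast
qed

lemma (in normal) infl_center:
  assumes g: "g \<in> carrier G"
  shows "g \<in> char_center G (infl G H \<chi>') \<longleftrightarrow> H #> g \<in> char_center (G Mod H) \<chi>'"
  unfolding char_center_def using g rcos_in infl_val infl_one rcos_one by auto

lemma (in normal) infl_kernel:
  assumes g: "g \<in> carrier G"
  shows "g \<in> char_kernel G (infl G H \<chi>') \<longleftrightarrow> H #> g \<in> char_kernel (G Mod H) \<chi>'"
  unfolding char_kernel_def using g rcos_in infl_val infl_one rcos_one by auto

lemma (in normal) mod_elem: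
  assumes "C \<in> carrier (G Mod H)"
  obtains g where "g \<in> carrier G" "C = H #> g"
  using assms unfolding mod_carrier RCOSETS_def by auto

lemma (in normal) infl_center_sub:
  "char_center (G Mod H) \<chi>' \<subseteq> char_center (G Mod H) \<psi>' \<longleftrightarrow>
   char_center G (infl G H \<chi>') \<subseteq> char_center G (infl G H \<psi>')"
proof
  assume s: "char_center (G Mod H) \<chi>' \<subseteq> char_center (G Mod H) \<psi>'"
  show "char_center G (infl G H \<chi>') \<subseteq> char_center G (infl G H \<psi>')"
  proof
    fix g assume g: "g \<in> char_center G (infl G H \<chi>')"
    then have gc: "g \<in> carrier G" unfolding char_center_def by auto
    show "g \<in> char_center G (infl G H \<psi>')" using g s infl_center[OF gc] by blast
  qed
next
  assume s: "char_center G (infl G H \<chi>') \<subseteq> char_center G (infl G H \<psi>')"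
  show "char_center (G Mod H) \<chi>' \<subseteq> char_center (G Mod H) \<psi>'"
  proof
    fix C assume C: "C \<in> char_center (G Mod H) \<chi>'"
    then have "C \<in> carrier (G Mod H)" unfolding char_center_def by auto
    then obtain g where gc: "g \<in> carrier G" and Cg: "C = H #> g" by (rule mod_elem)
    show "C \<in> char_center (G Mod H) \<psi>'" using C s infl_center[OF gc] Cg by blast
  qed
qed

lemma (in normal) defl_Irr:
  assumes fin: "finite (carrier G)" and chi: "\<chi> \<in> Irr G" and sub: "H \<subseteq> char_kernel G \<chi>"
  shows "\<exists>\<chi>' \<in> Irr (G Mod H). \<chi> = infl G H \<chi>'"
proof -
  obtain n \<rho> where r: "irreducible_rep G n \<rho>" and c: "\<chi> = (\<lambda>g \<in> carrier G. mat_trace (\<rho> g))"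
    using chi by (rule IrrE)
  note rD = irr_repD[OF r]
  have K: "char_kernel G \<chi> = {g \<in> carrier G. \<rho> g = 1\<^sub>m n}" by (rule char_kernel_rep[OF fin r c])
  have Hk: "\<rho> k = 1\<^sub>m n" if "k \<in> H" for k using sub that K by auto
  define rep where "rep C = (SOME g. g \<in> carrier G \<and> C = H #> g)" for C
  define \<rho>' where "\<rho>' C = \<rho> (rep C)" for C
  have key: "\<rho>' (H #> g) = \<rho> g" if g: "g \<in> carrier G" for g
  proof -
    have "\<exists>g'. g' \<in> carrier G \<and> H #> g = H #> g'" using g by blast
    then have g': "rep (H #> g) \<in> carrier G" "H #> g = H #> rep (H #> g)"
      unfolding rep_def by (metis (mono_tags, lifting) someI_ex)+
    define g' where "g' = rep (H #> g)"
    have "g' \<in> H #> g" using g'(1) g'(2) rcos_self[OF g'(1) subgroup_axioms] unfolding g'_def by simp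
    then obtain k where k: "k \<in> H" "g' = k \<otimes> g" unfolding r_coset_def by auto
    have "\<rho> g' = \<rho> k * \<rho> g" using k rD(3)[of k g] g subset by auto
    also have "\<dots> = \<rho> g" using Hk[OF k(1)] rD(1)[OF g] by simp
    finally show ?thesis unfolding \<rho>'_def g'_def .
  qed
  have isr: "is_rep (G Mod H) n \<rho>'"
    unfolding is_rep_def
  proof (intro conjI ballI)
    fix C assume "C \<in> carrier (G Mod H)"
    then obtain g where "g \<in> carrier G" "C = H #> g" by (rule mod_elem)
    then show "\<rho>' C \<in> carrier_mat n n" using key rD by auto
  next
    show "\<rho>' \<one>\<^bsub>G Mod H\<^esub> = 1\<^sub>m n" using key[of \<one>] rcos_one rD(2) by simp
  next
    fix C D assume C: "C \<in> carrier (G Mod H)" and D: "D \<in> carrier (G Mod H)"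
    obtain g where g: "g \<in> carrier G" "C = H #> g" using C by (rule mod_elem)
    obtain h where h: "h \<in> carrier G" "D = H #> h" using D by (rule mod_elem)
    have "C \<otimes>\<^bsub>G Mod H\<^esub> D = H #> (g \<otimes> h)" using g h rcos_sum by simp
    then show "\<rho>' (C \<otimes>\<^bsub>G Mod H\<^esub> D) = \<rho>' C * \<rho>' D" using key g h rD(3) by simp
  qed
  have im: "\<rho> ` carrier G = \<rho>' ` carrier (G Mod H)"
  proof -
    have "\<rho> ` carrier G = (\<lambda>g. \<rho>' (H #> g)) ` carrier G" using key by (auto simp: image_def)
    also have "\<dots> = \<rho>' ` carrier (G Mod H)" using rcosets_image mod_carrier by (metis image_image)
    finally show ?thesis .
  qed
  have ir: "irreducible_rep (G Mod H) n \<rho>'"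
    using r isr inv_sub_image[OF im] unfolding irreducible_rep_def by simp
  define \<chi>' where "\<chi>' = (\<lambda>C \<in> carrier (G Mod H). mat_trace (\<rho>' C))"
  have "\<chi>' \<in> Irr (G Mod H)" unfolding Irr_def \<chi>'_def using ir by blast
  moreover have "\<chi> = infl G H \<chi>'"
    unfolding infl_def c \<chi>'_def using rcos_in key by (auto intro!: restrict_ext)
  ultimately show ?thesis by blast
qed

lemma (in normal) quotient_nested:
  assumes "nested G"
  shows "nested (G Mod H)"
  unfolding nested_def
proof (intro ballI)
  fix \<chi>' \<psi>' assume c: "\<chi>' \<in> Irr (G Mod H)" and p: "\<psi>' \<in> Irr (G Mod H)"
  have "char_center G (infl G H \<chi>') \<subseteq> char_center G (infl G H \<psi>') \<or>
        char_center G (infl G H \<psi>') \<subseteq> char_center G (infl G H \<chi>')"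
    using assms infl_Irr[OF c] infl_Irr[OF p] unfolding nested_def by blast
  then show "char_center (G Mod H) \<chi>' \<subseteq> char_center (G Mod H) \<psi>' \<or>
        char_center (G Mod H) \<psi>' \<subseteq> char_center (G Mod H) \<chi>'"
    using infl_center_sub by blast
qed

lemma (in normal) nested_over:
  assumes fin: "finite (carrier G)" and nq: "nested (G Mod H)"
    and c: "\<chi> \<in> Irr G" and p: "\<psi> \<in> Irr G"
    and kc: "H \<subseteq> char_kernel G \<chi>" and kp: "H \<subseteq> char_kernel G \<psi>"
  shows "char_center G \<chi> \<subseteq> char_center G \<psi> \<or> char_center G \<psi> \<subseteq> char_center G \<chi>"
proof -
  obtain \<chi>' where c': "\<chi>' \<in> Irr (G Mod H)" "\<chi> = infl G H \<chi>'" using defl_Irr[OF fin c kc] by blast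
  obtain \<psi>' where p': "\<psi>' \<in> Irr (G Mod H)" "\<psi> = infl G H \<psi>'" using defl_Irr[OF fin p kp] by blast
  have "char_center (G Mod H) \<chi>' \<subseteq> char_center (G Mod H) \<psi>' \<or>
        char_center (G Mod H) \<psi>' \<subseteq> char_center (G Mod H) \<chi>'"
    using nq c'(1) p'(1) unfolding nested_def by blast
  then show ?thesis using infl_center_sub c'(2) p'(2) by blast
qed

lemma (in normal) mem_Union_cosets:
  assumes S: "S \<subseteq> carrier (G Mod H)"
  shows "g \<in> \<Union> S \<longleftrightarrow> g \<in> carrier G \<and> H #> g \<in> S"
proof
  assume "g \<in> \<Union> S"
  then obtain C where C: "C \<in> S" "g \<in> C" by auto
  then obtain x where x: "x \<in> carrier G" "C = H #> x" using S mod_elem by blast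
  have gc: "g \<in> carrier G" using C x r_coset_subset_G subset by blast
  have "H #> x = H #> g" using repr_independence[OF _ x(1) subgroup_axioms] C x by simp
  then show "g \<in> carrier G \<and> H #> g \<in> S" using C x gc by simp
next
  assume "g \<in> carrier G \<and> H #> g \<in> S"
  then show "g \<in> \<Union> S" using rcos_self[OF _ subgroup_axioms] by blast
qed

lemma (in normal) mod_group: "group (G Mod H)"
  by (rule factorgroup_is_group)

lemma (in normal) rcos_inv_mod:
  assumes g: "g \<in> carrier G"
  shows "inv\<^bsub>G Mod H\<^esub> (H #> g) = H #> inv g"
  using inv_FactGroup[OF rcos_in[OF g]] rcos_inv[OF g] by simp

lemma (in normal) preimage_normal:
  assumes S: "S \<lhd> G Mod H"
  shows "\<Union> S \<lhd> G" "H \<subseteq> \<Union> S"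
proof -
  interpret Q: group "G Mod H" by (rule mod_group)
  have Ssub: "subgroup S (G Mod H)" using S normal_imp_subgroup by blast
  have Sc: "S \<subseteq> carrier (G Mod H)" using Ssub subgroup.subset by blast
  note mem = mem_Union_cosets[OF Sc]
  show "\<Union> S \<lhd> G" unfolding normal_inv_iff
  proof (intro conjI subgroupI ballI)
    show "\<Union> S \<subseteq> carrier G" using mem by blast
  next
    have "H #> \<one> \<in> S" using rcos_one subgroup.one_closed[OF Ssub] by simp
    then show "\<Union> S \<noteq> {}" using mem by blast
  next
    fix a assume "a \<in> \<Union> S"
    then have a: "a \<in> carrier G" "H #> a \<in> S" using mem by auto
    have "inv\<^bsub>G Mod H\<^esub> (H #> a) \<in> S" using subgroup.m_inv_closed[OF Ssub a(2)] .
    then show "inv a \<in> \<Union> S" using rcos_inv_mod[OF a(1)] a mem by simp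
  next
    fix a b assume "a \<in> \<Union> S" "b \<in> \<Union> S"
    then have a: "a \<in> carrier G" "H #> a \<in> S" and b: "b \<in> carrier G" "H #> b \<in> S" using mem by auto
    have "(H #> a) \<otimes>\<^bsub>G Mod H\<^esub> (H #> b) \<in> S" using subgroup.m_closed[OF Ssub a(2) b(2)] .
    then show "a \<otimes> b \<in> \<Union> S" using rcos_sum[OF a(1) b(1)] a b mem by simp
  next
    fix x h assume x: "x \<in> carrier G" and "h \<in> \<Union> S"
    then have h: "h \<in> carrier G" "H #> h \<in> S" using mem by auto
    have "(H #> x) \<otimes>\<^bsub>G Mod H\<^esub> (H #> h) \<otimes>\<^bsub>G Mod H\<^esub> inv\<^bsub>G Mod H\<^esub> (H #> x) \<in> S"
      using normal.inv_op_closed2[OF S rcos_in[OF x] h(2)] .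
    then have "H #> (x \<otimes> h \<otimes> inv x) \<in> S"
      using rcos_inv_mod[OF x] rcos_sum[OF x h(1)] rcos_sum[of "x \<otimes> h" "inv x"] x h by simp
    then show "x \<otimes> h \<otimes> inv x \<in> \<Union> S" using mem x h by simp
  qed
  show "H \<subseteq> \<Union> S" using subgroup.one_closed[OF Ssub] by auto
qed

lemma (in group) mod_finite:
  assumes "finite (carrier G)" "N \<lhd> G"
  shows "finite (carrier (G Mod N))"
proof -
  have "carrier (G Mod N) \<subseteq> Pow (carrier G)"
    using rcosets_subset_PowG[OF normal_imp_subgroup[OF assms(2)]] by (simp add: FactGroup_def)
  then show ?thesis using assms(1) finite_subset by blast
qed

lemma (in group) chain_normal:
  assumes fin: "finite (carrier G)"
  shows "K_chain G i \<lhd> G \<and> K_chain G i \<subseteq> K_chain G (Suc i)"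
proof (induction i)
  case 0
  have n0: "K_chain G 0 \<lhd> G" using one_is_normal by simp
  interpret N: normal "K_chain G 0" G by (rule n0)
  have "K_sub (G Mod K_chain G 0) \<lhd> G Mod K_chain G 0"
    by (rule group.K_sub_normal[OF N.mod_group mod_finite[OF fin n0]])
  then show ?case using n0 N.preimage_normal by simp
next
  case (Suc i)
  then have n: "K_chain G i \<lhd> G" by blast
  interpret N: normal "K_chain G i" G by (rule n)
  have "K_sub (G Mod K_chain G i) \<lhd> G Mod K_chain G i"
    by (rule group.K_sub_normal[OF N.mod_group mod_finite[OF fin n]])
  then have n1: "K_chain G (Suc i) \<lhd> G" using N.preimage_normal by simp
  interpret N1: normal "K_chain G (Suc i)" G by (rule n1)
  have "K_sub (G Mod K_chain G (Suc i)) \<lhd> G Mod K_chain G (Suc i)"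
    by (rule group.K_sub_normal[OF N1.mod_group mod_finite[OF fin n1]])
  then show ?case using n1 N1.preimage_normal by simp
qed

lemma (in group) nested_top: "nested (G Mod carrier G)"
proof -
  have "carrier (G Mod carrier G) \<subseteq> {carrier G}"
    unfolding FactGroup_def RCOSETS_def using coset_join2[OF _ subgroup_self] by auto
  then show ?thesis unfolding nested_def char_center_def by blast
qed

lemma (in group) nested_from_trivial:
  assumes fin: "finite (carrier G)" and n: "nested (G Mod {\<one>})"
  shows "nested G"
proof -
  interpret N: normal "{\<one>}" G by (rule one_is_normal)
  show ?thesis unfolding nested_def
  proof (intro ballI)
    fix \<chi> \<psi> assume c: "\<chi> \<in> Irr G" and p: "\<psi> \<in> Irr G"
    show "char_center G \<chi> \<subseteq> char_center G \<psi> \<or> char_center G \<psi> \<subseteq> char_center G \<chi>"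
      by (rule N.nested_over[OF fin n c p]) (auto simp: char_kernel_def)
  qed
qed

lemma (in group) K_sub_nontrivial:
  assumes fin: "finite (carrier G)" and nest: "nested G" and na: "\<not> is_abelian G"
  shows "\<exists>c \<in> K_sub G. c \<noteq> \<one>"
proof -
  define X where "X = {\<chi> \<in> Irr G. group_center G \<subset> char_center G \<chi>}"
  have KS: "K_sub G = carrier G \<inter> \<Inter> (char_kernel G ` X)" using na unfolding K_sub_def X_def by simp
  obtain x y where xy: "x \<in> carrier G" "y \<in> carrier G" "x \<otimes> y \<noteq> y \<otimes> x"
    using na unfolding is_abelian_def by blast
  show ?thesis
  proof (cases "X = {}")
    case True
    have "x \<noteq> \<one>" using xy by auto
    then show ?thesis using KS True xy by auto
  next
    case False
    have finZ: "finite (char_center G ` X)"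
    proof (rule finite_subset)
      show "char_center G ` X \<subseteq> Pow (carrier G)" unfolding char_center_def by auto
      show "finite (Pow (carrier G))" using fin by simp
    qed
    obtain Z where Z: "Z \<in> char_center G ` X" and Zmin: "\<forall>b \<in> char_center G ` X. b \<le> Z \<longrightarrow> Z = b"
      using finite_has_minimal[OF finZ] False by blast
    obtain \<psi> where psi: "\<psi> \<in> X" "Z = char_center G \<psi>" using Z by blast
    then have "group_center G \<subset> Z" unfolding X_def by simp
    then obtain a where a: "a \<in> Z" "a \<notin> group_center G" by blast
    have ac: "a \<in> carrier G" using a psi unfolding char_center_def by auto
    obtain b where b: "b \<in> carrier G" "a \<otimes> b \<noteq> b \<otimes> a" using a ac unfolding group_center_def by auto
    define c where "c = a \<otimes> b \<otimes> inv (b \<otimes> a)"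
    have cc: "c \<in> carrier G" unfolding c_def using ac b by simp
    have c1: "c \<noteq> \<one>"
    proof
      assume "c = \<one>"
      then have "a \<otimes> b = \<one> \<otimes> (b \<otimes> a)" unfolding c_def using ac b
        by (metis inv_solve_right' m_closed one_closed)
      then show False using b ac by simp
    qed
    have "c \<in> char_kernel G \<chi>" if chi: "\<chi> \<in> X" for \<chi>
    proof -
      have chiI: "\<chi> \<in> Irr G" and psiI: "\<psi> \<in> Irr G" using chi psi unfolding X_def by auto
      have "char_center G \<chi> \<subseteq> char_center G \<psi> \<or> char_center G \<psi> \<subseteq> char_center G \<chi>"
        using nest chiI psiI unfolding nested_def by blast
      then have "Z \<subseteq> char_center G \<chi>" using Zmin chi psi by blast
      then have "a \<in> char_center G \<chi>" using a by blast
      then show ?thesis unfolding c_def by (rule char_center_comm[OF fin chiI _ b(1)])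
    qed
    then show ?thesis using KS cc c1 by blast
  qed
qed

lemma (in normal) strict_step:
  assumes fin: "finite (carrier G)" and nest: "nested (G Mod H)" and ne: "H \<noteq> carrier G"
  shows "\<exists>x \<in> \<Union> (K_sub (G Mod H)). x \<notin> H"
proof (cases "is_abelian (G Mod H)")
  case True
  then have "\<Union> (K_sub (G Mod H)) = carrier G"
    unfolding K_sub_def using rcosets_part_G[OF subgroup_axioms] by (simp add: mod_carrier)
  then show ?thesis using ne subset by blast
next
  case False
  interpret Q: group "G Mod H" by (rule mod_group)
  have finQ: "finite (carrier (G Mod H))"
    using rcosets_subset_PowG[OF subgroup_axioms] fin finite_subset by (simp add: mod_carrier) blast
  obtain C where C: "C \<in> K_sub (G Mod H)" "C \<noteq> \<one>\<^bsub>G Mod H\<^esub>"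
    using Q.K_sub_nontrivial[OF finQ nest False] by blast
  have "C \<in> carrier (G Mod H)" using C(1) unfolding K_sub_def using False by simp
  then obtain x where x: "x \<in> carrier G" "C = H #> x" by (rule mod_elem)
  have "x \<in> C" using x rcos_self[OF _ subgroup_axioms] by simp
  moreover have "x \<notin> H" using C(2) x coset_join2[OF x(1) subgroup_axioms] by auto
  ultimately show ?thesis using C(1) by blast
qed

lemma (in normal) nested_lift:
  assumes fin: "finite (carrier G)" and Mn: "\<Union> (K_sub (G Mod H)) \<lhd> G"
    and nM: "nested (G Mod \<Union> (K_sub (G Mod H)))"
  shows "nested (G Mod H)"
proof -
  let ?M = "\<Union> (K_sub (G Mod H))"
  let ?Q = "G Mod H"
  interpret Q: group ?Q by (rule mod_group)
  have finQ: "finite (carrier ?Q)"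
    using rcosets_subset_PowG[OF subgroup_axioms] fin finite_subset by (simp add: mod_carrier) blast
  show ?thesis unfolding nested_def
  proof (intro ballI)
    fix \<chi>' \<psi>' assume c: "\<chi>' \<in> Irr ?Q" and p: "\<psi>' \<in> Irr ?Q"
    have Zc: "group_center ?Q \<subseteq> char_center ?Q \<chi>'" by (rule Q.center_sub_char_center[OF finQ c])
    have Zp: "group_center ?Q \<subseteq> char_center ?Q \<psi>'" by (rule Q.center_sub_char_center[OF finQ p])
    show "char_center ?Q \<chi>' \<subseteq> char_center ?Q \<psi>' \<or> char_center ?Q \<psi>' \<subseteq> char_center ?Q \<chi>'"
    proof (cases "is_abelian ?Q")
      case True
      then have "group_center ?Q = carrier ?Q" unfolding group_center_def is_abelian_def by auto
      then have "char_center ?Q \<chi>' = carrier ?Q" "char_center ?Q \<psi>' = carrier ?Q"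
        using Zc Zp unfolding char_center_def by auto
      then show ?thesis by simp
    next
      case False
      define X where "X = {\<chi> \<in> Irr ?Q. group_center ?Q \<subset> char_center ?Q \<chi>}"
      have KS: "K_sub ?Q = carrier ?Q \<inter> \<Inter> (char_kernel ?Q ` X)"
        using False unfolding K_sub_def X_def by simp
      show ?thesis
      proof (cases "\<chi>' \<in> X \<and> \<psi>' \<in> X")
        case False
        then have "char_center ?Q \<chi>' = group_center ?Q \<or> char_center ?Q \<psi>' = group_center ?Q"
          using Zc Zp c p unfolding X_def by auto
        then show ?thesis using Zc Zp by auto
      next
        case True
        have KSc: "K_sub ?Q \<subseteq> carrier ?Q" using KS by auto
        have Mk: "?M \<subseteq> char_kernel G (infl G H \<phi>)" if "\<phi> \<in> X" for \<phi>
        proof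
          fix g assume "g \<in> ?M"
          then have g: "g \<in> carrier G" "H #> g \<in> K_sub ?Q" using mem_Union_cosets[OF KSc] by auto
          then have "H #> g \<in> char_kernel ?Q \<phi>" using KS that by auto
          then show "g \<in> char_kernel G (infl G H \<phi>)" using infl_kernel[OF g(1)] by simp
        qed
        have "char_center G (infl G H \<chi>') \<subseteq> char_center G (infl G H \<psi>') \<or>
              char_center G (infl G H \<psi>') \<subseteq> char_center G (infl G H \<chi>')"
          by (rule normal.nested_over[OF Mn fin nM infl_Irr[OF c] infl_Irr[OF p] Mk Mk])
             (use True in auto)
        then show ?thesis using infl_center_sub by blast
      qed
    qed
  qed
qed

theorem theoremE:
  fixes G :: "('a, 'b) monoid_scheme"
  assumes "group G" and "finite (carrier G)"
  shows "nested G \<longleftrightarrow> K_infty G = carrier G"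
proof -
  interpret group G by (rule assms(1))
  note fin = assms(2)
  let ?K = "K_chain G"
  have Kn: "?K i \<lhd> G" for i using chain_normal[OF fin] by blast
  have Ksuc: "?K i \<subseteq> ?K (Suc i)" for i using chain_normal[OF fin] by blast
  have Kmono: "?K i \<subseteq> ?K j" if "i \<le> j" for i j
    by (rule lift_Suc_mono_le[of ?K, OF Ksuc that])
  have Kc: "?K i \<subseteq> carrier G" for i using Kn[of i] normal_imp_subgroup subgroup.subset by blast
  show ?thesis
  proof
    assume nest: "nested G"
    have nq: "nested (G Mod ?K i)" for i using normal.quotient_nested[OF Kn nest] .
    have claim: "?K i = carrier G \<or> i + 1 \<le> card (?K i)" for i
    proof (induction i)
      case 0 then show ?case by simp
    next
      case (Suc i)
      show ?case
      proof (cases "?K i = carrier G")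
        case True
        then have "?K (Suc i) = carrier G" using Ksuc[of i] Kc[of "Suc i"] by blast
        then show ?thesis by blast
      next
        case False
        obtain x where "x \<in> ?K (Suc i)" "x \<notin> ?K i"
          using normal.strict_step[OF Kn fin nq False] by auto
        then have "?K i \<subset> ?K (Suc i)" using Ksuc[of i] by blast
        then have "card (?K i) < card (?K (Suc i))"
          by (rule psubset_card_mono[OF finite_subset[OF Kc fin]])
        then show ?thesis using Suc False by auto
      qed
    qed
    have "?K (card (carrier G)) = carrier G"
    proof (rule ccontr)
      assume "?K (card (carrier G)) \<noteq> carrier G"
      then have "card (carrier G) + 1 \<le> card (?K (card (carrier G)))" using claim by blast
      moreover have "card (?K (card (carrier G))) \<le> card (carrier G)"
        by (rule card_mono[OF fin Kc])
      ultimately show False by simp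
    qed
    then show "K_infty G = carrier G" unfolding K_infty_def using Kc by blast
  next
    assume Kinf: "K_infty G = carrier G"
    have "\<forall>g \<in> carrier G. \<exists>i. g \<in> ?K i" using Kinf unfolding K_infty_def by blast
    then obtain f where f: "\<And>g. g \<in> carrier G \<Longrightarrow> g \<in> ?K (f g)" by metis
    define n where "n = Max (f ` carrier G)"
    have "g \<in> ?K n" if "g \<in> carrier G" for g
    proof -
      have "f g \<le> n" unfolding n_def using fin that by simp
      then show ?thesis using Kmono f that by blast
    qed
    then have Kn_top: "?K n = carrier G" using Kc by blast
    have step: "nested (G Mod ?K (n - j))" if "j \<le> n" for j
      using that
    proof (induction j)
      case 0 then show ?case using nested_top Kn_top by simp
    next
      case (Suc j)
      then have IH: "nested (G Mod ?K (n - j))" by simp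
      have eq: "n - j = Suc (n - Suc j)" using Suc.prems by simp
      have "nested (G Mod ?K (Suc (n - Suc j)))" using IH eq by simp
      then have nM: "nested (G Mod \<Union> (K_sub (G Mod ?K (n - Suc j))))" by simp
      have Mn: "\<Union> (K_sub (G Mod ?K (n - Suc j))) \<lhd> G" using Kn[of "Suc (n - Suc j)"] by simp
      show ?case by (rule normal.nested_lift[OF Kn fin Mn nM])
    qed
    have "nested (G Mod {\<one>\<^bsub>G\<^esub>})" using step[of n] by simp
    then show "nested G" by (rule nested_from_trivial[OF fin])
  qed
qed


end
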